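(* Let $\mathcal{T}$ be a trim transducer with a single initial state. Then $\mathcal{W}(\mathcal{T})$ and $\mathcal{T}$ are equivalent, i.e. $[\![\mathcal{W}(\mathcal{T})]\!]=[\![\mathcal{T}]\!]$. Moreover, if $\mathcal{T}$ satisfies the weak twinning property, then $\mathcal{W}(\mathcal{T})$ is finite, and it is a multi-transducer.
   Context: $\mathcal{T}=(Q,E,I,F,f)$ is a transducer: finite state set $Q$, initial states $I$, final states $F$, transitions $E\subseteq Q\times\Sigma\times\Gamma^*\times Q$, final output $f:F\to\Gamma^*$; it realises $[\![\mathcal{T}]\!]=\{(u,wf(t)) : i\xrightarrow{u\mid w}t,\ i\in I,\ t\in F\}$ where $i\xrightarrow{u\mid w}t$ is a run reading $u$ and outputting $w$; trim means every state lies on a run from an initial to a final state. A multi-transducer is like a transducer except that the final output function maps final states to finite sets of words, and it realises $\{(u,wx): i\xrightarrow{u\mid w}t,\ x\in f(t)\}$ (possibly with infinitely many states). Determinisation $\bar{\mathcal{D}}(\mathcal{T})$: its states are the finite subsets $U$ of $Q\times\Gamma^*$. For such $U$ and $\sigma\in\Sigma$, let $R_{U,\sigma}=\{(q,uv) : (p,u)\in U,\ (p,\sigma,v,q)\in E\}$, let $w_{U,\sigma}$ be the longest common prefix of the words $\{w : (q,w)\in R_{U,\sigma}\text{ for some }q\}$ (taken to be $\epsilon$ if this set is empty), and $P_{U,\sigma}=\{(q,w) : (q,w_{U,\sigma}w)\in R_{U,\sigma}\}$. The transitions of $\bar{\mathcal{D}}(\mathcal{T})$ are $(U,\sigma,w_{U,\sigma},P_{U,\sigma})$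 for all $U,\sigma$; the initial state is $U_0=I\times\{\epsilon\}$; final states are the $U$ with $U\cap(F\times\Gamma^* )\neq\emptyset$, with final output set $\{wf(q) : q\in F,\ (q,w)\in U\}$. Rank: $n_U$ is the set of strongly connected components of $\mathcal{T}$ reachable from the states $q$ with $(q,w)\in U$ for some $w$. $\bar{\mathcal{W}}(\mathcal{T})$ is obtained from $\bar{\mathcal{D}}(\mathcal{T})$ by removing every transition $(U,\sigma,v,U')$ with $n_{U'}\subsetneq n_U$ and replacing it by the transitions $(U,\sigma,vw,\{(q,\epsilon)\})$ for all $(q,w)\in U'$. The weak determinisation $\mathcal{W}(\mathcal{T})$ is the trim part of $\bar{\mathcal{W}}(\mathcal{T})$ (restriction to states lying on some run from the initial state to a final state). $\Delta(v,w)=v^{-1}w$ in the free group over $\Gamma$. $\mathcal{T}$ satisfies the weak twinning property if for all states $q_1,q_2$, all $u,v\in\Sigma^*$ and $u_1,u_2,v_1,v_2\in\Gamma^*$ with $q_1\xrightarrow{u\mid u_1}q_1$, $q_1\xrightarrow{v\mid v_1}q_1$, $q_1\xrightarrow{u\mid u_2}q_2$, $q_2\xrightarrow{v\mid v_2}q_2$, one has $\Delta(u_1,u_2)=\Delta(u_1v_1,u_2v_2)$. *)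

theory Defs
  imports Main "HOL-Library.Sublist"
begin

record ('q, 'a, 'b) transducer =
  states :: "'q set"
  trans  :: "('q \<times> 'a \<times> 'b list \<times> 'q) set"
  init   :: "'q set"
  final  :: "'q set"
  fout   :: "'q \<Rightarrow> 'b list"

record ('s, 'a, 'b) mtransducer =
  mstates :: "'s set"
  mtrans  :: "('s \<times> 'a \<times> 'b list \<times> 's) set"
  minit   :: "'s set"
  mfinal  :: "'s set"
  mfout   :: "'s \<Rightarrow> 'b list set"

inductive run :: "('s \<times> 'a \<times> 'b list \<times> 's) set \<Rightarrow> 's \<Rightarrow> 'a list \<Rightarrow> 'b list \<Rightarrow> 's \<Rightarrow> bool"
  for E where
  run_nil: "run E p [] [] p"
| run_cons: "(p, \<sigma>, v, q) \<in> E \<Longrightarrow> run E q u w r \<Longrightarrow> run E p (\<sigma> # u) (v @ w) r"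

definition is_transducer :: "('q, 'a, 'b) transducer \<Rightarrow> bool" where
  "is_transducer T \<longleftrightarrow> finite (states T) \<and> finite (trans T)
     \<and> trans T \<subseteq> states T \<times> UNIV \<times> UNIV \<times> states T
     \<and> init T \<subseteq> states T \<and> final T \<subseteq> states T"

definition is_multi_transducer :: "('s, 'a, 'b) mtransducer \<Rightarrow> bool" where
  "is_multi_transducer M \<longleftrightarrow>
     mtrans M \<subseteq> mstates M \<times> UNIV \<times> UNIV \<times> mstates M
     \<and> minit M \<subseteq> mstates M \<and> mfinal M \<subseteq> mstates M
     \<and> (\<forall>q \<in> mfinal M. finite (mfout M q))"

definition realised :: "('q, 'a, 'b) transducer \<Rightarrow> ('a list \<times> 'b list) set" where
  "realised T = {(u, w @ fout T t) | u w i t. i \<in> init T \<and> t \<in> final T \<and> run (trans T) i u w t}"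

definition mrealised :: "('s, 'a, 'b) mtransducer \<Rightarrow> ('a list \<times> 'b list) set" where
  "mrealised M = {(u, w @ x) | u w x i t. i \<in> minit M \<and> t \<in> mfinal M
       \<and> run (mtrans M) i u w t \<and> x \<in> mfout M t}"

definition trim :: "('q, 'a, 'b) transducer \<Rightarrow> bool" where
  "trim T \<longleftrightarrow> (\<forall>q \<in> states T. \<exists>i \<in> init T. \<exists>t \<in> final T. \<exists>u w u' w'.
      run (trans T) i u w q \<and> run (trans T) q u' w' t)"

definition lcp :: "'b list set \<Rightarrow> 'b list" where
  "lcp W = (if W = {} then [] else
     (THE p. (\<forall>w \<in> W. prefix p w) \<and> (\<forall>p'. (\<forall>w \<in> W. prefix p' w) \<longrightarrow> prefix p' p)))"

definition detR :: "('q, 'a, 'b) transducer \<Rightarrow> ('q \<times> 'b list) set \<Rightarrow> 'a \<Rightarrow> ('q \<times> 'b list) set" where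
  "detR T U \<sigma> = {(q, u @ v) | p u v q. (p, u) \<in> U \<and> (p, \<sigma>, v, q) \<in> trans T}"

definition detw :: "('q, 'a, 'b) transducer \<Rightarrow> ('q \<times> 'b list) set \<Rightarrow> 'a \<Rightarrow> 'b list" where
  "detw T U \<sigma> = lcp (snd ` detR T U \<sigma>)"

definition detP :: "('q, 'a, 'b) transducer \<Rightarrow> ('q \<times> 'b list) set \<Rightarrow> 'a \<Rightarrow> ('q \<times> 'b list) set" where
  "detP T U \<sigma> = {(q, w). (q, detw T U \<sigma> @ w) \<in> detR T U \<sigma>}"

definition det_states :: "('q, 'a, 'b) transducer \<Rightarrow> ('q \<times> 'b list) set set" where
  "det_states T = {U. finite U \<and> U \<subseteq> states T \<times> UNIV}"

definition det_trans :: "('q, 'a, 'b) transducer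
    \<Rightarrow> (('q \<times> 'b list) set \<times> 'a \<times> 'b list \<times> ('q \<times> 'b list) set) set" where
  "det_trans T = {(U, \<sigma>, detw T U \<sigma>, detP T U \<sigma>) | U \<sigma>. U \<in> det_states T}"

definition det_final :: "('q, 'a, 'b) transducer \<Rightarrow> ('q \<times> 'b list) set set" where
  "det_final T = {U \<in> det_states T. U \<inter> (final T \<times> UNIV) \<noteq> {}}"

definition det_fout :: "('q, 'a, 'b) transducer \<Rightarrow> ('q \<times> 'b list) set \<Rightarrow> 'b list set" where
  "det_fout T U = {w @ fout T q | q w. q \<in> final T \<and> (q, w) \<in> U}"

definition determinise :: "('q, 'a, 'b) transducer \<Rightarrow> (('q \<times> 'b list) set, 'a, 'b) mtransducer" where
  "determinise T = \<lparr> mstates = det_states T, mtrans = det_trans T,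
      minit = {init T \<times> {[]}}, mfinal = det_final T, mfout = det_fout T \<rparr>"

definition graph_rel :: "('q, 'a, 'b) transducer \<Rightarrow> ('q \<times> 'q) set" where
  "graph_rel T = {(p, q). \<exists>\<sigma> v. (p, \<sigma>, v, q) \<in> trans T}"

definition scc :: "('q, 'a, 'b) transducer \<Rightarrow> 'q \<Rightarrow> 'q set" where
  "scc T q = {p. (q, p) \<in> (graph_rel T)\<^sup>* \<and> (p, q) \<in> (graph_rel T)\<^sup>*}"

definition rank :: "('q, 'a, 'b) transducer \<Rightarrow> ('q \<times> 'b list) set \<Rightarrow> 'q set set" where
  "rank T U = scc T ` ((graph_rel T)\<^sup>* `` (fst ` U))"

definition wtrans :: "('q, 'a, 'b) transducer
    \<Rightarrow> (('q \<times> 'b list) set \<times> 'a \<times> 'b list \<times> ('q \<times> 'b list) set) set" where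
  "wtrans T =
     {(U, \<sigma>, v, U'). (U, \<sigma>, v, U') \<in> det_trans T \<and> \<not> (rank T U' \<subset> rank T U)}
   \<union> {(U, \<sigma>, v @ w, {(q, [])}) | U \<sigma> v U' q w.
        (U, \<sigma>, v, U') \<in> det_trans T \<and> rank T U' \<subset> rank T U \<and> (q, w) \<in> U'}"

definition weak_det_bar :: "('q, 'a, 'b) transducer \<Rightarrow> (('q \<times> 'b list) set, 'a, 'b) mtransducer" where
  "weak_det_bar T = \<lparr> mstates = det_states T, mtrans = wtrans T,
      minit = {init T \<times> {[]}}, mfinal = det_final T, mfout = det_fout T \<rparr>"

definition useful :: "('s, 'a, 'b) mtransducer \<Rightarrow> 's set" where
  "useful M = {s \<in> mstates M. \<exists>i \<in> minit M. \<exists>t \<in> mfinal M. \<exists>u w u' w'.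
      run (mtrans M) i u w s \<and> run (mtrans M) s u' w' t}"

definition trim_part :: "('s, 'a, 'b) mtransducer \<Rightarrow> ('s, 'a, 'b) mtransducer" where
  "trim_part M = \<lparr> mstates = useful M,
      mtrans = mtrans M \<inter> (useful M \<times> UNIV \<times> UNIV \<times> useful M),
      minit = minit M \<inter> useful M, mfinal = mfinal M \<inter> useful M, mfout = mfout M \<rparr>"

definition weak_det :: "('q, 'a, 'b) transducer \<Rightarrow> (('q \<times> 'b list) set, 'a, 'b) mtransducer" where
  "weak_det T = trim_part (weak_det_bar T)"

text \<open>Elements of the free group over 'b are represented by freely reduced words over
  signed letters (x, True) = x and (x, False) = x^{-1}.\<close>
fun freduce :: "('b \<times> bool) list \<Rightarrow> ('b \<times> bool) list" where
  "freduce [] = []"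
| "freduce (x # xs) = (case freduce xs of
       [] \<Rightarrow> [x]
     | y # ys \<Rightarrow> (if fst x = fst y \<and> snd x \<noteq> snd y then ys else x # y # ys))"

definition Delta :: "'b list \<Rightarrow> 'b list \<Rightarrow> ('b \<times> bool) list" where
  "Delta v w = freduce (rev (map (\<lambda>x. (x, False)) v) @ map (\<lambda>x. (x, True)) w)"

definition weak_twinning :: "('q, 'a, 'b) transducer \<Rightarrow> bool" where
  "weak_twinning T \<longleftrightarrow> (\<forall>q1 \<in> states T. \<forall>q2 \<in> states T. \<forall>u v u1 u2 v1 v2.
      run (trans T) q1 u u1 q1 \<and> run (trans T) q1 v v1 q1 \<and>
      run (trans T) q1 u u2 q2 \<and> run (trans T) q2 v v2 q2
      \<longrightarrow> Delta u1 u2 = Delta (u1 @ v1) (u2 @ v2))"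

end

theory Submission
  imports Defs
begin

lemma run_append:
  "run E p u w q \<Longrightarrow> run E q u' w' r \<Longrightarrow> run E p (u @ u') (w @ w') r"
  by (induction rule: run.induct) (auto intro: run.intros)

lemma run_nil_iff: "run E p [] w q \<longleftrightarrow> w = [] \<and> q = p"
  by (auto elim: run.cases intro: run.intros)

lemma run_cons_iff: "run E p (\<sigma> # u) w r \<longleftrightarrow>
   (\<exists>v w' q. (p, \<sigma>, v, q) \<in> E \<and> run E q u w' r \<and> w = v @ w')"
proof
  assume "run E p (\<sigma> # u) w r"
  then show "\<exists>v w' q. (p, \<sigma>, v, q) \<in> E \<and> run E q u w' r \<and> w = v @ w'"
    by (cases rule: run.cases) auto
qed (auto intro: run.intros)

lemma run_mono: "run E p u w q \<Longrightarrow> E \<subseteq> E' \<Longrightarrow> run E' p u w q"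
  by (induction rule: run.induct) (auto intro: run.intros)

lemma run_states: "run E p u w q \<Longrightarrow> E \<subseteq> S \<times> UNIV \<times> UNIV \<times> S \<Longrightarrow> p \<in> S \<Longrightarrow> q \<in> S"
  by (induction rule: run.induct) auto

lemma run_out_set: "run E p u w q \<Longrightarrow> set w \<subseteq> (\<Union>(p,\<sigma>,v,q)\<in>E. set v)"
  by (induction rule: run.induct) fastforce+

lemma run_out_len: "run E p u w q \<Longrightarrow> (\<forall>(p,\<sigma>,v,q)\<in>E. length v \<le> M) \<Longrightarrow> length w \<le> length u * M"
  by (induction rule: run.induct) fastforce+

lemma run_graph: "run (trans T) p u w q \<Longrightarrow> (p, q) \<in> (graph_rel T)\<^sup>*"
  by (induction rule: run.induct) (auto simp: graph_rel_def intro: converse_rtrancl_into_rtrancl)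

lemma graph_run: "(p, q) \<in> (graph_rel T)\<^sup>* \<Longrightarrow> \<exists>u w. run (trans T) p u w q"
proof (induction rule: converse_rtrancl_induct)
  case base then show ?case by (auto intro: run.intros)
next
  case (step y z)
  then obtain u w where "run (trans T) z u w q" by auto
  moreover from step obtain \<sigma> v where "(y, \<sigma>, v, z) \<in> trans T" by (auto simp: graph_rel_def)
  ultimately show ?case by (auto intro: run.intros)
qed

lemma lcp_props:
  assumes "W \<noteq> {}"
  shows "(\<forall>w \<in> W. prefix (lcp W) w) \<and> (\<forall>p'. (\<forall>w \<in> W. prefix p' w) \<longrightarrow> prefix p' (lcp W))"
proof -
  obtain w0 where w0: "w0 \<in> W" using assms by auto
  let ?C = "{p. \<forall>w \<in> W. prefix p w}"
  have CS: "?C \<subseteq> set (prefixes w0)" using w0 by auto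
  have fin: "finite (length ` ?C)" using CS by (metis finite_imageI finite_set rev_finite_subset)
  have "[] \<in> ?C" by auto
  then have ne: "length ` ?C \<noteq> {}" by blast
  obtain p where p: "p \<in> ?C" "length p = Max (length ` ?C)"
    using Max_in[OF fin ne] by auto
  have max: "prefix p' p" if "p' \<in> ?C" for p'
  proof -
    have "prefix p' w0" "prefix p w0" using that p w0 by auto
    then have "prefix p' p \<or> prefix p p'" using prefix_same_cases by blast
    moreover have "length p' \<le> length p" using p that fin by auto
    ultimately show ?thesis using prefix_length_le prefix_order.antisym
      by (metis prefix_length_prefix prefix_order.refl prefix_order.trans)
  qed
  have P: "(\<forall>w \<in> W. prefix p w) \<and> (\<forall>p'. (\<forall>w \<in> W. prefix p' w) \<longrightarrow> prefix p' p)"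
    using p max by auto
  have "lcp W = p"
    unfolding lcp_def using assms
    apply simp
    apply (rule the_equality)
     apply (rule P)
    using P prefix_order.antisym by blast
  then show ?thesis using P by simp
qed

fun dl :: "'b list \<Rightarrow> 'b list \<Rightarrow> 'b list \<times> 'b list" where
  "dl (x # xs) (y # ys) = (if x = y then dl xs ys else (x # xs, y # ys))"
| "dl xs ys = (xs, ys)"

lemma dl_common: "dl (g @ a) (g @ b) = dl a b"
  by (induction g) auto

lemma dl_decomp: "\<exists>g. xs = g @ fst (dl xs ys) \<and> ys = g @ snd (dl xs ys)"
proof (induction xs ys rule: dl.induct)
  case (1 x xs y ys)
  show ?case
  proof (cases "x = y")
    case True
    then obtain g where "xs = g @ fst (dl xs ys) \<and> ys = g @ snd (dl xs ys)" using 1 by blast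
    then show ?thesis using True by (intro exI[of _ "x # g"]) auto
  next
    case False
    then show ?thesis by (intro exI[of _ "[]"]) auto
  qed
qed auto

lemma dl_app: "dl (xs @ zs) (ys @ ws) = dl (fst (dl xs ys) @ zs) (snd (dl xs ys) @ ws)"
  using dl_decomp[of xs ys] by (metis append.assoc dl_common)

lemma dl_cong: "dl y1 y2 = dl y1' y2' \<Longrightarrow> dl (y1 @ z1) (y2 @ z2) = dl (y1' @ z1) (y2' @ z2)"
  by (metis dl_app)

fun red :: "('b \<times> bool) list \<Rightarrow> bool" where
  "red (x # y # ys) = (\<not> (fst x = fst y \<and> snd x \<noteq> snd y) \<and> red (y # ys))"
| "red _ = True"

lemma red_freduce: "red (freduce xs)"
proof (induction xs)
  case (Cons x xs)
  then show ?case
    by (cases "freduce xs"; cases "tl (freduce xs)") (auto split: if_splits)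
qed simp

lemma freduce_red: "red xs \<Longrightarrow> freduce xs = xs"
proof (induction xs)
  case (Cons x xs)
  then show ?case by (cases xs) auto
qed simp

lemma freduce_idem: "freduce (freduce xs) = freduce xs"
  by (simp add: freduce_red red_freduce)

lemma freduce_app: "freduce (xs @ ys) = freduce (xs @ freduce ys)"
  by (induction xs) (auto simp: freduce_idem)

lemma freduce_cancel: "freduce ((x, False) # (x, True) # zs) = freduce zs"
proof -
  have r: "red (freduce zs)" by (rule red_freduce)
  show ?thesis
  proof (cases "freduce zs")
    case Nil then show ?thesis by simp
  next
    case (Cons h t)
    then show ?thesis using r by (cases t) (auto simp: prod_eq_iff)
  qed
qed

lemma red_append: "red (xs @ ys) \<longleftrightarrow> red xs \<and> red ys \<and>
   (xs \<noteq> [] \<and> ys \<noteq> [] \<longrightarrow> \<not> (fst (last xs) = fst (hd ys) \<and> snd (last xs) \<noteq> snd (hd ys)))"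
proof (induction xs rule: red.induct)
  case (1 x y ys') then show ?case by auto
next
  case ("2_1") then show ?case by simp
next
  case ("2_2" x) then show ?case by (cases ys; cases "tl ys") auto
qed

lemma red_same_sign: "\<forall>x \<in> set xs. snd x = s \<Longrightarrow> red xs"
  by (induction xs rule: red.induct) auto

abbreviation neg where "neg xs \<equiv> map (\<lambda>x. (x, False)) xs"
abbreviation pos where "pos xs \<equiv> map (\<lambda>x. (x, True)) xs"

lemma red_np: "\<not> (a \<noteq> [] \<and> b \<noteq> [] \<and> hd a = hd b) \<Longrightarrow> red (rev (neg a) @ pos b)"
proof -
  assume h: "\<not> (a \<noteq> [] \<and> b \<noteq> [] \<and> hd a = hd b)"
  have 1: "red (rev (neg a))" by (rule red_same_sign[of _ False]) auto
  have 2: "red (pos b)" by (rule red_same_sign[of _ True]) auto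
  have 3: "fst (last (rev (neg a))) \<noteq> fst (hd (pos b))" if "a \<noteq> []" "b \<noteq> []"
    using that h by (simp add: last_rev hd_map)
  show ?thesis unfolding red_append using 1 2 3 by auto
qed

lemma freduce_np: "freduce (rev (neg u1) @ pos u2) = rev (neg (fst (dl u1 u2))) @ pos (snd (dl u1 u2))"
proof (induction u1 arbitrary: u2)
  case Nil
  have "freduce (pos u2) = pos u2" by (rule freduce_red, rule red_same_sign[of _ True]) auto
  then show ?case by simp
next
  case (Cons x u1)
  show ?case
  proof (cases "u2 \<noteq> [] \<and> hd u2 = x")
    case True
    then obtain u2' where u2: "u2 = x # u2'" by (cases u2) auto
    have "freduce (rev (neg (x # u1)) @ pos u2) = freduce (rev (neg u1) @ ((x,False) # (x, True) # pos u2'))"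
      using u2 by simp
    also have "\<dots> = freduce (rev (neg u1) @ freduce ((x,False) # (x,True) # pos u2'))"
      by (rule freduce_app)
    also have "\<dots> = freduce (rev (neg u1) @ freduce (pos u2'))" by (simp only: freduce_cancel)
    also have "\<dots> = freduce (rev (neg u1) @ pos u2')" by (rule freduce_app[symmetric])
    also have "\<dots> = rev (neg (fst (dl u1 u2'))) @ pos (snd (dl u1 u2'))" by (rule Cons)
    finally show ?thesis using u2 by simp
  next
    case False
    then have "dl (x # u1) u2 = (x # u1, u2)" by (cases u2) auto
    moreover have "red (rev (neg (x # u1)) @ pos u2)" using False by (intro red_np) auto
    ultimately show ?thesis by (simp add: freduce_red)
  qed
qed

lemma filt1a: "filter snd (rev (neg a)) = []" by (induction a) auto
lemma filt1b: "filter snd (pos b) = pos b" by (induction b) auto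
lemma filt1c: "filter (Not o snd) (rev (neg a)) = rev (neg a)" by (induction a) auto
lemma filt1d: "filter (Not o snd) (pos b) = []" by (induction b) auto
lemmas filt1 = filt1a filt1b filt1c filt1d

lemma np_inj: "rev (neg a) @ pos b = rev (neg a') @ pos b' \<Longrightarrow> a = a' \<and> b = b'"
proof -
  assume h: "rev (neg a) @ pos b = rev (neg a') @ pos b'"
  have "pos b = pos b'" using arg_cong[OF h, of "filter snd"] by (simp add: filt1)
  moreover have "rev (neg a) = rev (neg a')" using arg_cong[OF h, of "filter (Not o snd)"]
    by (simp only: filter_append filt1) simp
  ultimately have "pos b = pos b'" "neg a = neg a'" by auto
  moreover have "inj (\<lambda>x. (x, True))" "inj (\<lambda>x. (x, False))" by (auto intro: injI)
  ultimately show ?thesis by (metis inj_map_eq_map)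
qed

lemma Delta_dl: "Delta u1 u2 = Delta u1' u2' \<Longrightarrow> dl u1 u2 = dl u1' u2'"
  unfolding Delta_def freduce_np by (drule np_inj) (simp add: prod_eq_iff)

lemma mrealisedI: "i \<in> minit M \<Longrightarrow> t \<in> mfinal M \<Longrightarrow> run (mtrans M) i u w t \<Longrightarrow> x \<in> mfout M t
   \<Longrightarrow> wx = w @ x \<Longrightarrow> (u, wx) \<in> mrealised M"
  unfolding mrealised_def by blast

lemma detR_mem: "(q, y) \<in> detR T U \<sigma> \<longleftrightarrow> (\<exists>p a b. (p, a) \<in> U \<and> (p, \<sigma>, b, q) \<in> trans T \<and> y = a @ b)"
  by (auto simp: detR_def)

lemma detP_mem: "(q, z) \<in> detP T U \<sigma> \<longleftrightarrow> (q, detw T U \<sigma> @ z) \<in> detR T U \<sigma>"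
  by (simp add: detP_def)

lemma detw_prefix: "(q, y) \<in> detR T U \<sigma> \<Longrightarrow> \<exists>z. y = detw T U \<sigma> @ z"
proof -
  assume h: "(q, y) \<in> detR T U \<sigma>"
  then have "snd ` detR T U \<sigma> \<noteq> {}" by auto
  from lcp_props[OF this] h have "prefix (detw T U \<sigma>) y" unfolding detw_def by force
  then show ?thesis by (auto simp: prefix_def)
qed

lemma detw_max: "detR T U \<sigma> \<noteq> {} \<Longrightarrow> (\<forall>(q,z) \<in> detR T U \<sigma>. prefix p' z) \<Longrightarrow> prefix p' (detw T U \<sigma>)"
proof -
  assume "detR T U \<sigma> \<noteq> {}" "\<forall>(q,z) \<in> detR T U \<sigma>. prefix p' z"
  moreover then have "snd ` detR T U \<sigma> \<noteq> {}" by auto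
  ultimately show ?thesis using lcp_props[of "snd ` detR T U \<sigma>"] unfolding detw_def by fastforce
qed

lemma wtrans_cases:
  "(U, \<sigma>, v, U1) \<in> wtrans T \<Longrightarrow>
    (U1 = detP T U \<sigma> \<and> v = detw T U \<sigma> \<and> U \<in> det_states T \<and> \<not> rank T U1 \<subset> rank T U) \<or>
    (\<exists>q w. U1 = {(q, [])} \<and> v = detw T U \<sigma> @ w \<and> (q, w) \<in> detP T U \<sigma> \<and> U \<in> det_states T
       \<and> rank T (detP T U \<sigma>) \<subset> rank T U)"
  by (auto simp: wtrans_def det_trans_def)

lemma detR_finite: "finite U \<Longrightarrow> finite (trans T) \<Longrightarrow> finite (detR T U \<sigma>)"
proof -
  assume "finite U" "finite (trans T)"
  then have "finite ((\<lambda>((p,a),(p',\<sigma>',b,q)). (q, a @ b)) ` (U \<times> trans T))" by auto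
  moreover have "detR T U \<sigma> \<subseteq> (\<lambda>((p,a),(p',\<sigma>',b,q)). (q, a @ b)) ` (U \<times> trans T)"
    by (auto simp: detR_def image_iff) force
  ultimately show ?thesis by (rule finite_subset[rotated])
qed

lemma detP_finite: "finite U \<Longrightarrow> finite (trans T) \<Longrightarrow> finite (detP T U \<sigma>)"
proof -
  assume a: "finite U" "finite (trans T)"
  have "detP T U \<sigma> \<subseteq> (\<lambda>(q, w). (q, drop (length (detw T U \<sigma>)) w)) ` detR T U \<sigma>"
    by (auto simp: detP_def image_iff) force
  then show ?thesis using detR_finite[OF a] finite_surj by blast
qed

lemma detP_states: "is_transducer T \<Longrightarrow> (q, z) \<in> detP T U \<sigma> \<Longrightarrow> q \<in> states T"
  by (auto simp: detP_def detR_def is_transducer_def)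

lemma detP_det_states: "is_transducer T \<Longrightarrow> U \<in> det_states T \<Longrightarrow> detP T U \<sigma> \<in> det_states T"
proof -
  assume t: "is_transducer T" and U: "U \<in> det_states T"
  have "finite (detP T U \<sigma>)" using U t detP_finite by (auto simp: det_states_def is_transducer_def)
  moreover have "detP T U \<sigma> \<subseteq> states T \<times> UNIV" using detP_states[OF t] by auto
  ultimately show ?thesis by (simp add: det_states_def)
qed

lemma wtrans_states1: "is_transducer T \<Longrightarrow> (U, \<sigma>, v, U1) \<in> wtrans T \<Longrightarrow> U \<in> det_states T \<and> U1 \<in> det_states T"
proof -
  assume t: "is_transducer T" and h: "(U, \<sigma>, v, U1) \<in> wtrans T"
  from wtrans_cases[OF h] show "U \<in> det_states T \<and> U1 \<in> det_states T"
  proof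
    assume "U1 = detP T U \<sigma> \<and> v = detw T U \<sigma> \<and> U \<in> det_states T \<and> \<not> rank T U1 \<subset> rank T U"
    then show ?thesis using detP_det_states[OF t] by auto
  next
    assume "\<exists>q w. U1 = {(q, [])} \<and> v = detw T U \<sigma> @ w \<and> (q, w) \<in> detP T U \<sigma> \<and> U \<in> det_states T
       \<and> rank T (detP T U \<sigma>) \<subset> rank T U"
    then show ?thesis using detP_states[OF t] by (auto simp: det_states_def)
  qed
qed

lemma wtrans_states: "is_transducer T \<Longrightarrow> wtrans T \<subseteq> det_states T \<times> UNIV \<times> UNIV \<times> det_states T"
  using wtrans_states1 by fast

lemma sound:
  "run (wtrans T) U u w t \<Longrightarrow> t \<in> det_final T \<Longrightarrow> x \<in> det_fout T t \<Longrightarrow>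
   \<exists>q y w' t'. (q, y) \<in> U \<and> run (trans T) q u w' t' \<and> t' \<in> final T \<and> w @ x = y @ w' @ fout T t'"
proof (induction rule: run.induct)
  case (run_nil p)
  then obtain q y where "x = y @ fout T q" "q \<in> final T" "(q, y) \<in> p" by (auto simp: det_fout_def)
  then show ?case using run.run_nil[of "trans T" q]
    by (intro exI[of _ q] exI[of _ y] exI[of _ "[]"] exI[of _ q]) simp
next
  case (run_cons U \<sigma> v U1 u w r)
  then obtain q y w' t' where IH: "(q, y) \<in> U1" "run (trans T) q u w' t'" "t' \<in> final T"
    "w @ x = y @ w' @ fout T t'" by blast
  from wtrans_cases[OF run_cons(1)] show ?case
  proof
    assume h: "U1 = detP T U \<sigma> \<and> v = detw T U \<sigma> \<and> U \<in> det_states T \<and> \<not> rank T U1 \<subset> rank T U"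
    then have "(q, detw T U \<sigma> @ y) \<in> detR T U \<sigma>" using IH by (simp add: detP_mem)
    then obtain p a b where pab: "(p, a) \<in> U" "(p, \<sigma>, b, q) \<in> trans T" "detw T U \<sigma> @ y = a @ b"
      by (auto simp: detR_mem)
    then have "run (trans T) p (\<sigma> # u) (b @ w') t'" using IH by (auto intro: run.intros)
    moreover have "(v @ w) @ x = a @ (b @ w') @ fout T t'" using h IH pab
      by (metis append.assoc)
    ultimately show ?thesis using pab IH by blast
  next
    assume "\<exists>q w. U1 = {(q, [])} \<and> v = detw T U \<sigma> @ w \<and> (q, w) \<in> detP T U \<sigma> \<and> U \<in> det_states T
       \<and> rank T (detP T U \<sigma>) \<subset> rank T U"
    then obtain q0 w0 where h: "U1 = {(q0, [])}" "v = detw T U \<sigma> @ w0" "(q0, w0) \<in> detP T U \<sigma>" by blast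
    then have qy: "q = q0" "y = []" using IH by auto
    have "(q0, detw T U \<sigma> @ w0) \<in> detR T U \<sigma>" using h by (simp add: detP_mem)
    then obtain p a b where pab: "(p, a) \<in> U" "(p, \<sigma>, b, q0) \<in> trans T" "detw T U \<sigma> @ w0 = a @ b"
      by (auto simp: detR_mem)
    then have "run (trans T) p (\<sigma> # u) (b @ w') t'" using IH qy by (auto intro: run.intros)
    moreover have "(v @ w) @ x = a @ (b @ w') @ fout T t'" using h IH pab qy
      by (metis append.assoc append_Nil)
    ultimately show ?thesis using pab IH by blast
  qed
qed

lemma complete:
  "run (trans T) q u w' t' \<Longrightarrow> t' \<in> final T \<Longrightarrow> is_transducer T \<Longrightarrow> (q, y) \<in> U \<Longrightarrow> U \<in> det_states T \<Longrightarrow>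
   \<exists>w t x. run (wtrans T) U u w t \<and> t \<in> det_final T \<and> x \<in> det_fout T t \<and> w @ x = y @ w' @ fout T t'"
proof (induction arbitrary: U y rule: run.induct)
  case (run_nil p)
  then have "U \<in> det_final T" "y @ fout T p \<in> det_fout T U"
    by (auto simp: det_final_def det_fout_def)
  then show ?case using run.run_nil[of "wtrans T" U]
    by (intro exI[of _ "[]"] exI[of _ U] exI[of _ "y @ fout T p"]) simp
next
  case (run_cons q \<sigma> b q1 u w1 r)
  have "(q1, y @ b) \<in> detR T U \<sigma>" using run_cons.prems(3) run_cons.hyps(1) unfolding detR_mem by blast
  then obtain z where z: "y @ b = detw T U \<sigma> @ z" using detw_prefix[of q1 "y @ b" T U \<sigma>] by blast
  have "(q1, detw T U \<sigma> @ z) \<in> detR T U \<sigma>" using \<open>(q1, y @ b) \<in> detR T U \<sigma>\<close> z by simp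
  then have zP: "(q1, z) \<in> detP T U \<sigma>" by (simp only: detP_mem)
  have U1: "detP T U \<sigma> \<in> det_states T" using detP_det_states[OF run_cons.prems(2) run_cons.prems(4)] .
  have dt: "(U, \<sigma>, detw T U \<sigma>, detP T U \<sigma>) \<in> det_trans T" using run_cons.prems(4) unfolding det_trans_def by blast
  show ?case
  proof (cases "rank T (detP T U \<sigma>) \<subset> rank T U")
    case False
    then have tr: "(U, \<sigma>, detw T U \<sigma>, detP T U \<sigma>) \<in> wtrans T" using dt by (auto simp: wtrans_def)
    obtain w t x where IH: "run (wtrans T) (detP T U \<sigma>) u w t" "t \<in> det_final T" "x \<in> det_fout T t"
      "w @ x = z @ w1 @ fout T r" using run_cons.IH[OF run_cons.prems(1,2) zP U1] by blast
    have "run (wtrans T) U (\<sigma> # u) (detw T U \<sigma> @ w) t" using run.run_cons[OF tr IH(1)] .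
    moreover have "(detw T U \<sigma> @ w) @ x = y @ (b @ w1) @ fout T r" using IH z by (metis append.assoc)
    ultimately show ?thesis using IH by blast
  next
    case True
    have tr: "(U, \<sigma>, detw T U \<sigma> @ z, {(q1, [])}) \<in> wtrans T"
      unfolding wtrans_def
      apply (rule UnI2)
      apply (simp only: mem_Collect_eq)
      apply (rule exI[of _ U], rule exI[of _ \<sigma>], rule exI[of _ "detw T U \<sigma>"], rule exI[of _ "detP T U \<sigma>"],
          rule exI[of _ q1], rule exI[of _ z])
      using dt zP True by simp
    have q1: "q1 \<in> states T" using detP_states[OF run_cons.prems(2) zP] .
    have U1': "{(q1, [])} \<in> det_states T" using q1 by (auto simp: det_states_def)
    obtain w t x where IH: "run (wtrans T) {(q1, [])} u w t" "t \<in> det_final T" "x \<in> det_fout T t"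
      "w @ x = [] @ w1 @ fout T r" using run_cons.IH[OF run_cons.prems(1,2) _ U1'] by blast
    have "run (wtrans T) U (\<sigma> # u) ((detw T U \<sigma> @ z) @ w) t" using run.run_cons[OF tr IH(1)] .
    moreover have "((detw T U \<sigma> @ z) @ w) @ x = y @ (b @ w1) @ fout T r" using IH z by (metis append.assoc append_Nil)
    ultimately show ?thesis using IH by blast
  qed
qed

lemma Wbar_real:
  assumes t: "is_transducer T" and i: "init T = {i}"
  shows "mrealised (weak_det_bar T) = realised T"
proof
  show "mrealised (weak_det_bar T) \<subseteq> realised T"
  proof clarify
    fix u wx
    assume "(u, wx) \<in> mrealised (weak_det_bar T)"
    then obtain w x t where r: "run (wtrans T) {(i, [])} u w t" "t \<in> det_final T" "x \<in> det_fout T t" "wx = w @ x"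
      using i by (auto simp: mrealised_def weak_det_bar_def)
    from sound[OF r(1-3)] obtain w' t' where "run (trans T) i u w' t'" "t' \<in> final T" "w @ x = w' @ fout T t'"
      by auto
    then show "(u, wx) \<in> realised T" using r i by (auto simp: realised_def)
  qed
next
  show "realised T \<subseteq> mrealised (weak_det_bar T)"
  proof clarify
    fix u wx
    assume "(u, wx) \<in> realised T"
    then obtain w' t' where r: "run (trans T) i u w' t'" "t' \<in> final T" "wx = w' @ fout T t'"
      using i by (auto simp: realised_def)
    have "{(i, [])} \<in> det_states T" using t i by (auto simp: det_states_def is_transducer_def)
    from complete[OF r(1,2) t _ this] obtain w t x where
      "run (wtrans T) {(i, [])} u w t" "t \<in> det_final T" "x \<in> det_fout T t" "w @ x = w' @ fout T t'"
      by auto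
    then show "(u, wx) \<in> mrealised (weak_det_bar T)" using r i
      by (intro mrealisedI[where i="{(i, [])}" and t=t and w=w and x=x]) (auto simp: weak_det_bar_def)
  qed
qed

lemma trim_run:
  "run (mtrans M) s u w t \<Longrightarrow> mtrans M \<subseteq> mstates M \<times> UNIV \<times> UNIV \<times> mstates M \<Longrightarrow> s \<in> mstates M \<Longrightarrow>
   i \<in> minit M \<Longrightarrow> run (mtrans M) i u0 w0 s \<Longrightarrow> t \<in> mfinal M \<Longrightarrow>
   run (mtrans (trim_part M)) s u w t \<and> s \<in> useful M"
proof (induction arbitrary: u0 w0 rule: run.induct)
  case (run_nil p)
  then show ?case by (auto simp: useful_def trim_part_def intro: run.intros)
next
  case (run_cons p \<sigma> v q u w r)
  have "run (mtrans M) p [\<sigma>] v q" using run_cons(1) by (metis append_Nil2 run.run_cons run.run_nil)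
  then have "run (mtrans M) i (u0 @ [\<sigma>]) (w0 @ v) q"
    using run_append[OF run_cons.prems(4)] by blast
  moreover have "q \<in> mstates M" using run_cons by blast
  ultimately have IH: "run (mtrans (trim_part M)) q u w r" "q \<in> useful M"
    using run_cons.IH run_cons.prems by blast+
  have "run (mtrans M) p (\<sigma> # u) (v @ w) r" using run_cons by (auto intro: run.intros)
  then have pu: "p \<in> useful M" using run_cons.prems by (auto simp: useful_def)
  then have "(p, \<sigma>, v, q) \<in> mtrans (trim_part M)" using IH run_cons by (auto simp: trim_part_def)
  then show ?case using IH pu by (auto intro: run.intros)
qed

lemma mreal_trim:
  assumes "mtrans M \<subseteq> mstates M \<times> UNIV \<times> UNIV \<times> mstates M" "minit M \<subseteq> mstates M"
  shows "mrealised (trim_part M) = mrealised M"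
proof
  show "mrealised (trim_part M) \<subseteq> mrealised M"
    unfolding mrealised_def trim_part_def using run_mono by fastforce
next
  show "mrealised M \<subseteq> mrealised (trim_part M)"
  proof clarify
    fix u wx
    assume "(u, wx) \<in> mrealised M"
    then obtain w x i t where r: "i \<in> minit M" "t \<in> mfinal M" "run (mtrans M) i u w t" "x \<in> mfout M t"
      "wx = w @ x" by (auto simp: mrealised_def)
    have "run (mtrans (trim_part M)) i u w t \<and> i \<in> useful M"
      using trim_run[OF r(3) assms(1) _ r(1) _ r(2), of "[]" "[]"] r assms(2) by (auto intro: run.intros)
    moreover have tS: "t \<in> mstates M" using run_states[OF r(3) assms(1)] assms(2) r(1) by blast
    moreover have "t \<in> useful M" unfolding useful_def using tS r(1,2,3) run.run_nil[of "mtrans M" t] by blast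
    ultimately show "(u, wx) \<in> mrealised (trim_part M)" using r
      by (intro mrealisedI[where i=i and t=t and w=w and x=x]) (auto simp: trim_part_def)
  qed
qed

lemma weak_det_real:
  assumes t: "is_transducer T" and i: "init T = {i}"
  shows "mrealised (weak_det T) = realised T"
proof -
  have "mtrans (weak_det_bar T) \<subseteq> mstates (weak_det_bar T) \<times> UNIV \<times> UNIV \<times> mstates (weak_det_bar T)"
    using wtrans_states[OF t] by (simp add: weak_det_bar_def)
  moreover have "minit (weak_det_bar T) \<subseteq> mstates (weak_det_bar T)"
    using t i by (auto simp: weak_det_bar_def det_states_def is_transducer_def)
  ultimately show ?thesis unfolding weak_det_def using mreal_trim Wbar_real[OF t i] by metis
qed

inductive run2 for E :: "('s \<times> 'a \<times> 'b list \<times> 's) set" where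
  r2nil: "run2 E p1 p2 [] [] [] p1 p2"
| r2cons: "(p1, \<sigma>, v1, q1) \<in> E \<Longrightarrow> (p2, \<sigma>, v2, q2) \<in> E \<Longrightarrow> run2 E q1 q2 u w1 w2 r1 r2 \<Longrightarrow>
    run2 E p1 p2 (\<sigma> # u) (v1 @ w1) (v2 @ w2) r1 r2"

lemma run2_runs: "run2 E p1 p2 u w1 w2 r1 r2 \<Longrightarrow> run E p1 u w1 r1 \<and> run E p2 u w2 r2"
  by (induction rule: run2.induct) (auto intro: run.intros)

lemma runs_run2: "run E p1 u w1 r1 \<Longrightarrow> run E p2 u w2 r2 \<Longrightarrow> run2 E p1 p2 u w1 w2 r1 r2"
proof (induction arbitrary: p2 w2 rule: run.induct)
  case (run_nil p)
  then show ?case by (simp add: run_nil_iff r2nil)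
next
  case (run_cons p \<sigma> v q u w r)
  from run_cons.prems obtain v' w' q' where "(p2, \<sigma>, v', q') \<in> E" "run E q' u w' r2" "w2 = v' @ w'"
    by (auto simp: run_cons_iff)
  then show ?case using run2.r2cons[OF run_cons(1) _ run_cons.IH] by blast
qed

lemma cycle:
  "run2 E p1 p2 u w1 w2 r1 r2 \<Longrightarrow>
   (\<exists>a v b a1 v1 b1 a2 v2 b2 m1 m2. u = a @ v @ b \<and> v \<noteq> [] \<and> w1 = a1 @ v1 @ b1 \<and> w2 = a2 @ v2 @ b2
      \<and> run2 E p1 p2 a a1 a2 m1 m2 \<and> run2 E m1 m2 v v1 v2 m1 m2 \<and> run2 E m1 m2 b b1 b2 r1 r2)
   \<or> (\<exists>V. finite V \<and> card V = Suc (length u) \<and> (\<forall>m\<in>V. \<exists>a b a1 b1 a2 b2. u = a @ b \<and> w1 = a1 @ b1 \<and> w2 = a2 @ b2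
        \<and> run2 E p1 p2 a a1 a2 (fst m) (snd m) \<and> run2 E (fst m) (snd m) b b1 b2 r1 r2))"
proof (induction rule: run2.induct)
  case (r2nil p1 p2)
  have "\<exists>a b a1 b1 a2 b2. [] = a @ b \<and> [] = a1 @ b1 \<and> [] = a2 @ b2
        \<and> run2 E p1 p2 a a1 a2 p1 p2 \<and> run2 E p1 p2 b b1 b2 p1 p2"
    using run2.r2nil[of E p1 p2] by (intro exI[of _ "[]"]) simp
  then show ?case
    apply - apply (rule disjI2, rule exI[of _ "{(p1, p2)}"]) by simp
next
  case (r2cons p1 \<sigma> v1 q1 p2 v2 q2 u w1 w2 r1 r2)
  note tr = r2cons.hyps(1,2)
  from r2cons.IH show ?case
  proof
    assume "\<exists>a v b a1 v1 b1 a2 v2 b2 m1 m2. u = a @ v @ b \<and> v \<noteq> [] \<and> w1 = a1 @ v1 @ b1 \<and> w2 = a2 @ v2 @ b2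
      \<and> run2 E q1 q2 a a1 a2 m1 m2 \<and> run2 E m1 m2 v v1 v2 m1 m2 \<and> run2 E m1 m2 b b1 b2 r1 r2"
    then obtain a v b a1 v1' b1 a2 v2' b2 m1 m2 where h: "u = a @ v @ b" "v \<noteq> []" "w1 = a1 @ v1' @ b1"
      "w2 = a2 @ v2' @ b2" "run2 E q1 q2 a a1 a2 m1 m2" "run2 E m1 m2 v v1' v2' m1 m2" "run2 E m1 m2 b b1 b2 r1 r2"
      by (elim exE conjE) (rule that; assumption)
    have "run2 E p1 p2 (\<sigma> # a) (v1 @ a1) (v2 @ a2) m1 m2" using run2.r2cons[OF tr h(5)] .
    then show ?thesis using h
      apply - apply (rule disjI1, rule exI[of _ "\<sigma> # a"], rule exI[of _ v], rule exI[of _ b], rule exI[of _ "v1 @ a1"], rule exI[of _ v1'], rule exI[of _ b1], rule exI[of _ "v2 @ a2"], rule exI[of _ v2'], rule exI[of _ b2], rule exI[of _ m1], rule exI[of _ m2]) by simp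
  next
    assume "\<exists>V. finite V \<and> card V = Suc (length u) \<and> (\<forall>m\<in>V. \<exists>a b a1 b1 a2 b2. u = a @ b \<and> w1 = a1 @ b1 \<and> w2 = a2 @ b2
        \<and> run2 E q1 q2 a a1 a2 (fst m) (snd m) \<and> run2 E (fst m) (snd m) b b1 b2 r1 r2)"
    then obtain V where V: "finite V" "card V = Suc (length u)"
      "\<forall>m \<in> V. \<exists>a b a1 b1 a2 b2. u = a @ b \<and> w1 = a1 @ b1 \<and> w2 = a2 @ b2
        \<and> run2 E q1 q2 a a1 a2 (fst m) (snd m) \<and> run2 E (fst m) (snd m) b b1 b2 r1 r2" by (elim exE conjE) (rule that; assumption)
    show ?thesis
    proof (cases "(p1, p2) \<in> V")
      case True
      then obtain a b a1 b1 a2 b2 where h: "u = a @ b" "w1 = a1 @ b1" "w2 = a2 @ b2"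
        "run2 E q1 q2 a a1 a2 p1 p2" "run2 E p1 p2 b b1 b2 r1 r2" using bspec[OF V(3) True] by (elim exE conjE) (rule that; simp)
      have c: "run2 E p1 p2 (\<sigma> # a) (v1 @ a1) (v2 @ a2) p1 p2" using run2.r2cons[OF tr h(4)] .
      show ?thesis using h c run2.r2nil[of E p1 p2]
        apply - apply (rule disjI1, rule exI[of _ "[]"], rule exI[of _ "\<sigma> # a"], rule exI[of _ b], rule exI[of _ "[]"], rule exI[of _ "v1 @ a1"], rule exI[of _ b1], rule exI[of _ "[]"], rule exI[of _ "v2 @ a2"], rule exI[of _ b2], rule exI[of _ p1], rule exI[of _ p2]) by simp
    next
      case False
      have mem: "\<exists>a b a1 b1 a2 b2. \<sigma> # u = a @ b \<and> v1 @ w1 = a1 @ b1 \<and> v2 @ w2 = a2 @ b2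
        \<and> run2 E p1 p2 a a1 a2 (fst m) (snd m) \<and> run2 E (fst m) (snd m) b b1 b2 r1 r2"
        if "m \<in> insert (p1, p2) V" for m
      proof (cases "m = (p1, p2)")
        case True
        then show ?thesis using run2.r2nil[of E p1 p2] run2.r2cons[OF tr r2cons.hyps(3)]
          apply - apply (rule exI[of _ "[]"], rule exI[of _ "\<sigma> # u"], rule exI[of _ "[]"], rule exI[of _ "v1 @ w1"], rule exI[of _ "[]"], rule exI[of _ "v2 @ w2"]) by simp
      next
        case False
        then have "m \<in> V" using that by auto
        then obtain a b a1 b1 a2 b2 where h: "u = a @ b" "w1 = a1 @ b1" "w2 = a2 @ b2"
          "run2 E q1 q2 a a1 a2 (fst m) (snd m)" "run2 E (fst m) (snd m) b b1 b2 r1 r2" using bspec[OF V(3) \<open>m \<in> V\<close>]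
          by (elim exE conjE) (rule that; assumption)
        show ?thesis using h run2.r2cons[OF tr h(4)]
          apply - apply (rule exI[of _ "\<sigma> # a"], rule exI[of _ b], rule exI[of _ "v1 @ a1"], rule exI[of _ b1], rule exI[of _ "v2 @ a2"], rule exI[of _ b2]) by simp
      qed
      have "finite (insert (p1, p2) V)" "card (insert (p1, p2) V) = Suc (length (\<sigma> # u))"
        using V False by auto
      then show ?thesis
        apply (intro disjI2 exI[of _ "insert (p1, p2) V"] conjI)
          apply assumption
         apply assumption
        apply (rule ballI)
        apply (rule mem)
        apply assumption
        done
    qed
  qed
qed

lemma dl_len: "length (fst (dl y1 y2)) \<le> length y1" "length (snd (dl y1 y2)) \<le> length y2"
proof -
  obtain g where "y1 = g @ fst (dl y1 y2)" "y2 = g @ snd (dl y1 y2)" using dl_decomp by blast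
  then show "length (fst (dl y1 y2)) \<le> length y1" "length (snd (dl y1 y2)) \<le> length y2"
    by (metis le_add2 length_append)+
qed

lemma pump:
  assumes t: "is_transducer T" and wt: "weak_twinning T" and q: "q \<in> states T"
  shows "run (trans T) q u y1 s \<Longrightarrow> run (trans T) q u y2 p \<Longrightarrow> (s, q) \<in> (graph_rel T)\<^sup>* \<Longrightarrow>
    \<exists>u' y1' y2' s' p'. run (trans T) q u' y1' s' \<and> run (trans T) q u' y2' p'
      \<and> length u' < card (states T \<times> states T) \<and> dl y1 y2 = dl y1' y2'"
proof (induction "length u" arbitrary: u y1 y2 s p rule: less_induct)
  case less
  have ET: "trans T \<subseteq> states T \<times> UNIV \<times> UNIV \<times> states T" "finite (states T)"
    using t by (auto simp: is_transducer_def)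
  show ?case
  proof (cases "length u < card (states T \<times> states T)")
    case True
    then show ?thesis using less.prems by blast
  next
    case False
    have r2: "run2 (trans T) q q u y1 y2 s p" using runs_run2[OF less.prems(1,2)] .
    from cycle[OF r2] show ?thesis
    proof
      assume "\<exists>V. finite V \<and> card V = Suc (length u) \<and> (\<forall>m\<in>V. \<exists>a b a1 b1 a2 b2. u = a @ b \<and> y1 = a1 @ b1 \<and> y2 = a2 @ b2
        \<and> run2 (trans T) q q a a1 a2 (fst m) (snd m) \<and> run2 (trans T) (fst m) (snd m) b b1 b2 s p)"
      then obtain V where V: "finite V" "card V = Suc (length u)"
        "\<forall>m\<in>V. \<exists>a b a1 b1 a2 b2. u = a @ b \<and> y1 = a1 @ b1 \<and> y2 = a2 @ b2
        \<and> run2 (trans T) q q a a1 a2 (fst m) (snd m) \<and> run2 (trans T) (fst m) (snd m) b b1 b2 s p"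
        by (elim exE conjE) (rule that; assumption)
      have "V \<subseteq> states T \<times> states T"
      proof
        fix m assume "m \<in> V"
        then obtain a a1 a2 where rr: "run2 (trans T) q q a a1 a2 (fst m) (snd m)" using V(3) by meson
        have "run (trans T) q a a1 (fst m)" "run (trans T) q a a2 (snd m)" using run2_runs[OF rr] by auto
        then have "fst m \<in> states T" "snd m \<in> states T" using run_states[OF _ ET(1) q] by blast+
        then show "m \<in> states T \<times> states T" by (simp add: mem_Times_iff)
      qed
      then have "card V \<le> card (states T \<times> states T)" using ET(2) by (intro card_mono) auto
      then show ?thesis using V(2) False by simp
    next
      assume "\<exists>a v b a1 v1 b1 a2 v2 b2 m1 m2. u = a @ v @ b \<and> v \<noteq> [] \<and> y1 = a1 @ v1 @ b1 \<and> y2 = a2 @ v2 @ b2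
      \<and> run2 (trans T) q q a a1 a2 m1 m2 \<and> run2 (trans T) m1 m2 v v1 v2 m1 m2 \<and> run2 (trans T) m1 m2 b b1 b2 s p"
      then obtain a v b a1 v1 b1 a2 v2 b2 m1 m2 where h: "u = a @ v @ b" "v \<noteq> []" "y1 = a1 @ v1 @ b1"
        "y2 = a2 @ v2 @ b2" "run2 (trans T) q q a a1 a2 m1 m2" "run2 (trans T) m1 m2 v v1 v2 m1 m2"
        "run2 (trans T) m1 m2 b b1 b2 s p"
        by (elim exE conjE) (rule that; assumption)
      have ra1: "run (trans T) q a a1 m1" and ra2: "run (trans T) q a a2 m2" using run2_runs[OF h(5)] by auto
      have rv1: "run (trans T) m1 v v1 m1" and rv2: "run (trans T) m2 v v2 m2" using run2_runs[OF h(6)] by auto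
      have rb1: "run (trans T) m1 b b1 s" and rb2: "run (trans T) m2 b b2 p" using run2_runs[OF h(7)] by auto
      have m12: "m1 \<in> states T" "m2 \<in> states T" using run_states[OF ra1 ET(1) q] run_states[OF ra2 ET(1) q] by auto
      obtain z oo where zo: "run (trans T) s z oo q" using graph_run[OF less.prems(3)] by blast
      have c1: "run (trans T) m1 ((b @ z) @ a) ((b1 @ oo) @ a1) m1"
        using run_append[OF run_append[OF rb1 zo] ra1] .
      have c2: "run (trans T) m1 ((b @ z) @ a) ((b1 @ oo) @ a2) m2"
        using run_append[OF run_append[OF rb1 zo] ra2] .
      have "Delta ((b1 @ oo) @ a1) ((b1 @ oo) @ a2) = Delta (((b1 @ oo) @ a1) @ v1) (((b1 @ oo) @ a2) @ v2)"
        using wt m12 c1 c2 rv1 rv2 unfolding weak_twinning_def by blast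
      then have "dl ((b1 @ oo) @ a1) ((b1 @ oo) @ a2) = dl (((b1 @ oo) @ a1) @ v1) (((b1 @ oo) @ a2) @ v2)"
        by (rule Delta_dl)
      then have "dl a1 a2 = dl (a1 @ v1) (a2 @ v2)" by (simp add: dl_common)
      then have "dl (a1 @ b1) (a2 @ b2) = dl ((a1 @ v1) @ b1) ((a2 @ v2) @ b2)" by (rule dl_cong)
      then have eq: "dl y1 y2 = dl (a1 @ b1) (a2 @ b2)" using h by simp
      have s1: "run (trans T) q (a @ b) (a1 @ b1) s" using run_append[OF ra1 rb1] .
      have s2: "run (trans T) q (a @ b) (a2 @ b2) p" using run_append[OF ra2 rb2] .
      have "length (a @ b) < length u" using h(1,2) by simp
      from less.hyps[OF this s1 s2 less.prems(3)] show ?thesis using eq by metis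
    qed
  qed
qed

definition Inv where "Inv T U \<longleftrightarrow> (\<exists>q\<in>states T. \<exists>u c. rank T U = rank T {(q, [])}
   \<and> (\<forall>p x. (p, x) \<in> U \<longrightarrow> run (trans T) q u (c @ x) p)
   \<and> (U \<noteq> {} \<longrightarrow> (\<forall>d. (\<forall>p x. (p, x) \<in> U \<longrightarrow> prefix d x) \<longrightarrow> d = [])))"

lemma rank_detP_sub: "rank T (detP T U \<sigma>) \<subseteq> rank T U"
proof -
  have 1: "fst ` detP T U \<sigma> \<subseteq> graph_rel T `` (fst ` U)"
  proof
    fix q assume "q \<in> fst ` detP T U \<sigma>"
    then obtain z where "(q, z) \<in> detP T U \<sigma>" by auto
    then have "(q, detw T U \<sigma> @ z) \<in> detR T U \<sigma>" by (simp add: detP_mem)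
    then obtain p a b where "(p, a) \<in> U" "(p, \<sigma>, b, q) \<in> trans T" by (auto simp: detR_mem)
    then show "q \<in> graph_rel T `` (fst ` U)" by (force simp: graph_rel_def)
  qed
  have "(graph_rel T)\<^sup>* `` (fst ` detP T U \<sigma>) \<subseteq> (graph_rel T)\<^sup>* `` (fst ` U)"
  proof
    fix x assume "x \<in> (graph_rel T)\<^sup>* `` (fst ` detP T U \<sigma>)"
    then obtain y where y: "y \<in> fst ` detP T U \<sigma>" "(y, x) \<in> (graph_rel T)\<^sup>*" by auto
    have "y \<in> graph_rel T `` (fst ` U)" using 1 y(1) by blast
    then obtain a where "a \<in> fst ` U" "(a, y) \<in> graph_rel T" by blast
    then show "x \<in> (graph_rel T)\<^sup>* `` (fst ` U)" using y(2) converse_rtrancl_into_rtrancl by fast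
  qed
  then show ?thesis unfolding rank_def by (rule image_mono)
qed

lemma Inv_step:
  assumes t: "is_transducer T" and tr: "(U, \<sigma>, v, U1) \<in> wtrans T" and I: "Inv T U"
  shows "Inv T U1"
  using wtrans_cases[OF tr]
proof
  assume h: "U1 = detP T U \<sigma> \<and> v = detw T U \<sigma> \<and> U \<in> det_states T \<and> \<not> rank T U1 \<subset> rank T U"
  from I obtain q u c where q: "q \<in> states T" and rk: "rank T U = rank T {(q, [])}"
    and R: "\<forall>p x. (p, x) \<in> U \<longrightarrow> run (trans T) q u (c @ x) p"
    unfolding Inv_def by blast
  have rk1: "rank T U1 = rank T {(q, [])}" using h rank_detP_sub[of T U \<sigma>] rk by blast
  have R1: "run (trans T) q (u @ [\<sigma>]) ((c @ detw T U \<sigma>) @ x1) p1" if "(p1, x1) \<in> U1" for p1 x1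
  proof -
    have "(p1, detw T U \<sigma> @ x1) \<in> detR T U \<sigma>" using that h by (simp add: detP_mem)
    then obtain p a b where pab: "(p, a) \<in> U" "(p, \<sigma>, b, p1) \<in> trans T" "detw T U \<sigma> @ x1 = a @ b"
      by (auto simp: detR_mem)
    have "run (trans T) p [\<sigma>] b p1" using pab(2) by (metis append_Nil2 run.run_cons run.run_nil)
    from run_append[OF R[rule_format, OF pab(1)] this] show ?thesis using pab(3) by simp
  qed
  have NP: "d = []" if ne: "U1 \<noteq> {}" and d: "\<forall>p x. (p, x) \<in> U1 \<longrightarrow> prefix d x" for d
  proof -
    have "detR T U \<sigma> \<noteq> {}" using ne h by (auto simp: detP_def)
    moreover have "\<forall>(q, z) \<in> detR T U \<sigma>. prefix (detw T U \<sigma> @ d) z"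
    proof clarify
      fix q z assume qz: "(q, z) \<in> detR T U \<sigma>"
      obtain z' where z': "z = detw T U \<sigma> @ z'" using detw_prefix[OF qz] by blast
      then have "(q, z') \<in> U1" using h qz by (simp add: detP_mem)
      then have "prefix d z'" using d by blast
      then show "prefix (detw T U \<sigma> @ d) z" using z' by simp
    qed
    ultimately have "prefix (detw T U \<sigma> @ d) (detw T U \<sigma>)" by (rule detw_max)
    then show "d = []" by (simp add: prefix_def)
  qed
  show ?thesis unfolding Inv_def
    apply (rule bexI[OF _ q], rule exI[of _ "u @ [\<sigma>]"], rule exI[of _ "c @ detw T U \<sigma>"])
    using rk1 R1 NP by blast
next
  assume "\<exists>q w. U1 = {(q, [])} \<and> v = detw T U \<sigma> @ w \<and> (q, w) \<in> detP T U \<sigma> \<and> U \<in> det_states T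
       \<and> rank T (detP T U \<sigma>) \<subset> rank T U"
  then obtain q w where h: "U1 = {(q, [])}" "(q, w) \<in> detP T U \<sigma>" by blast
  have q: "q \<in> states T" using detP_states[OF t h(2)] .
  show ?thesis unfolding Inv_def h
    apply (rule bexI[OF _ q])
    apply (rule exI[of _ "[]"], rule exI[of _ "[]"])
    using run.run_nil[of "trans T" q] by auto
qed

lemma Inv_run: "run (wtrans T) U u w U' \<Longrightarrow> is_transducer T \<Longrightarrow> Inv T U \<Longrightarrow> Inv T U'"
proof (induction rule: run.induct)
  case (run_cons p \<sigma> v q u w r)
  show ?case using Inv_step[OF run_cons.prems(1) run_cons.hyps(1) run_cons.prems(2)] run_cons.IH run_cons.prems(1)
    by blast
qed simp

lemma empty_run: "run (wtrans T) U u w t \<Longrightarrow> U = {} \<Longrightarrow> t = {}"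
proof (induction rule: run.induct)
  case (run_cons p \<sigma> v q u w r)
  have "detR T {} \<sigma> = {}" by (simp add: detR_def)
  then have "detP T {} \<sigma> = {}" by (simp add: detP_def)
  then have "q = {}" using wtrans_cases[OF run_cons(1)] run_cons.prems by auto
  then show ?case using run_cons.IH by simp
qed simp

lemma useful_ne: "U \<in> useful (weak_det_bar T) \<Longrightarrow> U \<noteq> {}"
proof
  assume "U \<in> useful (weak_det_bar T)" "U = {}"
  then obtain t u w where "t \<in> det_final T" "run (wtrans T) U u w t"
    by (auto simp: useful_def weak_det_bar_def)
  then show False using empty_run \<open>U = {}\<close> by (fastforce simp: det_final_def)
qed

definition MM where "MM T = Max (insert 0 ((\<lambda>(p, \<sigma>, v, q). length v) ` trans T))"
definition KK where "KK T = card (states T \<times> states T) * MM T"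
definition GG where "GG T = (\<Union>(p, \<sigma>, v, q) \<in> trans T. set v)"

lemma MM_ge: "is_transducer T \<Longrightarrow> \<forall>(p, \<sigma>, v, q) \<in> trans T. length v \<le> MM T"
proof clarify
  fix p \<sigma> v q assume t: "is_transducer T" and h: "(p, \<sigma>, v, q) \<in> trans T"
  have "length v \<in> insert 0 ((\<lambda>(p, \<sigma>, v, q). length v) ` trans T)" using h by force
  moreover have "finite (insert 0 ((\<lambda>(p, \<sigma>, v, q). length v) ` trans T))"
    using t by (simp add: is_transducer_def)
  ultimately show "length v \<le> MM T" unfolding MM_def by (rule Max_ge[rotated])
qed

lemma short_len:
  assumes t: "is_transducer T" and r: "run (trans T) q u y s" and l: "length u < card (states T \<times> states T)"
  shows "length y \<le> KK T"
proof -
  have "length y \<le> length u * MM T" using run_out_len[OF r MM_ge[OF t]] .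
  also have "\<dots> \<le> KK T" unfolding KK_def using l by simp
  finally show ?thesis .
qed

lemma bound:
  assumes t: "is_transducer T" and wt: "weak_twinning T" and I: "Inv T U" and ne: "U \<noteq> {}"
  shows "\<forall>p x. (p, x) \<in> U \<longrightarrow> length x \<le> 2 * KK T \<and> set x \<subseteq> GG T"
proof -
  from I obtain q u c where q: "q \<in> states T" and rk: "rank T U = rank T {(q, [])}"
    and R: "\<forall>p x. (p, x) \<in> U \<longrightarrow> run (trans T) q u (c @ x) p"
    and NP: "\<forall>d. (\<forall>p x. (p, x) \<in> U \<longrightarrow> prefix d x) \<longrightarrow> d = []"
    unfolding Inv_def using ne by blast
  have "scc T q \<in> rank T {(q, [])}" unfolding rank_def by auto
  then have "scc T q \<in> rank T U" using rk by simp
  then obtain s0 p0 where sp: "s0 \<in> fst ` U" "(s0, p0) \<in> (graph_rel T)\<^sup>*" "scc T p0 = scc T q"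
    unfolding rank_def by auto
  have "q \<in> scc T q" by (simp add: scc_def)
  then have "q \<in> scc T p0" using sp(3) by simp
  then have "(p0, q) \<in> (graph_rel T)\<^sup>*" by (simp add: scc_def)
  then have s0q: "(s0, q) \<in> (graph_rel T)\<^sup>*" using sp(2) by simp
  obtain xr where xr: "(s0, xr) \<in> U" using sp(1) by auto
  have pb: "length (fst (dl xr x)) \<le> KK T \<and> length (snd (dl xr x)) \<le> KK T" if px: "(p, x) \<in> U" for p x
  proof -
    obtain u' y1' y2' s' p' where sh: "run (trans T) q u' y1' s'" "run (trans T) q u' y2' p'"
      "length u' < card (states T \<times> states T)" "dl (c @ xr) (c @ x) = dl y1' y2'"
      using pump[OF t wt q R[rule_format, OF xr] R[rule_format, OF px] s0q] by blast
    have "dl xr x = dl y1' y2'" using sh(4) by (simp add: dl_common)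
    moreover have "length y1' \<le> KK T" "length y2' \<le> KK T" using short_len[OF t] sh by blast+
    ultimately show ?thesis using dl_len[of y1' y2'] by simp
  qed
  have decomp: "\<exists>g. xr = g @ fst (dl xr x) \<and> x = g @ snd (dl xr x)" for x using dl_decomp .
  define d where "d = take (length xr - KK T) xr"
  have "prefix d x" if px: "(p, x) \<in> U" for p x
  proof -
    obtain g where g: "xr = g @ fst (dl xr x)" "x = g @ snd (dl xr x)" using decomp by blast
    have "length xr = length g + length (fst (dl xr x))" using g(1) by (metis length_append)
    then have "length xr - KK T \<le> length g" using pb[OF px] by linarith
    then have "take (length xr - KK T) (g @ fst (dl xr x)) = take (length xr - KK T) g" by simp
    then have "d = take (length xr - KK T) g" unfolding d_def by (simp only: g(1)[symmetric])
    then have "prefix d g" by (simp add: take_is_prefix)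
    then show ?thesis using g(2) by (metis prefix_append)
  qed
  then have "d = []" using NP by blast
  then have xrK: "length xr \<le> KK T" unfolding d_def by auto
  show ?thesis
  proof (intro allI impI conjI)
    fix p x assume px: "(p, x) \<in> U"
    obtain g where g: "xr = g @ fst (dl xr x)" "x = g @ snd (dl xr x)" using decomp by blast
    have "length g \<le> length xr" using g(1) by (metis le_add1 length_append)
    moreover have "length x = length g + length (snd (dl xr x))" using g(2) by (metis length_append)
    ultimately show "length x \<le> 2 * KK T" using pb[OF px] xrK by linarith
    have "set (c @ x) \<subseteq> GG T" using run_out_set[OF R[rule_format, OF px]] unfolding GG_def by simp
    then show "set x \<subseteq> GG T" by simp
  qed
qed

lemma useful_finite:
  assumes t: "is_transducer T" and wt: "weak_twinning T" and i: "init T = {i}"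
  shows "finite (useful (weak_det_bar T))"
proof -
  have fG: "finite (GG T)" using t unfolding GG_def is_transducer_def by auto
  have fS: "finite (states T)" using t by (simp add: is_transducer_def)
  let ?X = "states T \<times> {xs. set xs \<subseteq> GG T \<and> length xs \<le> 2 * KK T}"
  have "finite ?X" using fS finite_lists_length_le[OF fG] by blast
  moreover have "useful (weak_det_bar T) \<subseteq> Pow ?X"
  proof
    fix U assume U: "U \<in> useful (weak_det_bar T)"
    then have ds: "U \<in> det_states T" and r: "\<exists>u w. run (wtrans T) {(i, [])} u w U"
      using i by (auto simp: useful_def weak_det_bar_def)
    have I0: "Inv T {(i, [])}" unfolding Inv_def
      apply (rule bexI[of _ i], rule exI[of _ "[]"], rule exI[of _ "[]"])
      using run.run_nil[of "trans T" i] i t by (auto simp: is_transducer_def)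
    have "Inv T U" using r Inv_run[OF _ t I0] by blast
    from bound[OF t wt this useful_ne[OF U]] ds show "U \<in> Pow ?X"
      by (auto simp: det_states_def)
  qed
  ultimately show ?thesis by (meson finite_Pow_iff finite_subset)
qed

lemma mtrans_finite:
  assumes t: "is_transducer T" and fu: "finite (useful (weak_det_bar T))"
  shows "finite (mtrans (weak_det T))"
proof -
  let ?S = "(\<lambda>(p, \<sigma>, v, q). \<sigma>) ` trans T"
  let ?F = "\<lambda>U \<sigma>. insert (U, \<sigma>, detw T U \<sigma>, detP T U \<sigma>)
      ((\<lambda>(q, w). (U, \<sigma>, detw T U \<sigma> @ w, {(q, [])})) ` detP T U \<sigma>)"
  have sub: "mtrans (weak_det T) \<subseteq> (\<Union>U \<in> useful (weak_det_bar T). \<Union>\<sigma> \<in> ?S. ?F U \<sigma>)"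
  proof clarify
    fix U \<sigma> v U1
    assume h: "(U, \<sigma>, v, U1) \<in> mtrans (weak_det T)"
    then have tr: "(U, \<sigma>, v, U1) \<in> wtrans T" and uU: "U \<in> useful (weak_det_bar T)"
      and uU1: "U1 \<in> useful (weak_det_bar T)"
      by (auto simp: weak_det_def trim_part_def weak_det_bar_def)
    have Sig: "\<sigma> \<in> ?S" if "(q, z) \<in> detP T U \<sigma>" for q z
    proof -
      have "(q, detw T U \<sigma> @ z) \<in> detR T U \<sigma>" using that by (simp add: detP_mem)
      then obtain p a b where "(p, \<sigma>, b, q) \<in> trans T" by (auto simp: detR_mem)
      then show ?thesis by force
    qed
    from wtrans_cases[OF tr]
    have "\<sigma> \<in> ?S \<and> (U, \<sigma>, v, U1) \<in> ?F U \<sigma>"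
    proof
      assume a: "U1 = detP T U \<sigma> \<and> v = detw T U \<sigma> \<and> U \<in> det_states T \<and> \<not> rank T U1 \<subset> rank T U"
      then obtain q z where "(q, z) \<in> detP T U \<sigma>" using useful_ne[OF uU1] by auto
      then show ?thesis using Sig a by auto
    next
      assume "\<exists>q w. U1 = {(q, [])} \<and> v = detw T U \<sigma> @ w \<and> (q, w) \<in> detP T U \<sigma> \<and> U \<in> det_states T
       \<and> rank T (detP T U \<sigma>) \<subset> rank T U"
      then obtain q w where a: "U1 = {(q, [])}" "v = detw T U \<sigma> @ w" "(q, w) \<in> detP T U \<sigma>" by blast
      then show ?thesis using Sig by force
    qed
    then show "(U, \<sigma>, v, U1) \<in> (\<Union>U \<in> useful (weak_det_bar T). \<Union>\<sigma> \<in> ?S. ?F U \<sigma>)" using uU by blast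
  qed
  have "finite (\<Union>U \<in> useful (weak_det_bar T). \<Union>\<sigma> \<in> ?S. ?F U \<sigma>)"
  proof (intro finite_UN_I fu)
    show "finite ?S" using t by (simp add: is_transducer_def)
  next
    fix U \<sigma> assume "U \<in> useful (weak_det_bar T)"
    then have "finite U" by (auto simp: useful_def weak_det_bar_def det_states_def)
    then have "finite (detP T U \<sigma>)" using t detP_finite by (auto simp: is_transducer_def)
    then show "finite (?F U \<sigma>)" by simp
  qed
  then show ?thesis using sub by (rule finite_subset[rotated])
qed

lemma multi: "is_multi_transducer (weak_det T)"
proof -
  have "finite (det_fout T U)" if "U \<in> det_final T" for U
  proof -
    have "finite U" using that by (simp add: det_final_def det_states_def)
    moreover have "det_fout T U \<subseteq> (\<lambda>(q, w). w @ fout T q) ` U" by (force simp: det_fout_def)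
    ultimately show ?thesis by (meson finite_imageI finite_subset)
  qed
  then show ?thesis
    by (auto simp: is_multi_transducer_def weak_det_def trim_part_def weak_det_bar_def)
qed

theorem proposition2:
  fixes T :: "('q, 'a, 'b) transducer"
  assumes "is_transducer T" and "trim T" and "\<exists>i. init T = {i}"
  shows "mrealised (weak_det T) = realised T
         \<and> (weak_twinning T \<longrightarrow>
              finite (mstates (weak_det T)) \<and> finite (mtrans (weak_det T))
              \<and> is_multi_transducer (weak_det T))"
proof -
  obtain i where i: "init T = {i}" using assms(3) by blast
  have 1: "mrealised (weak_det T) = realised T" using weak_det_real[OF assms(1) i] .
  have 2: "finite (mstates (weak_det T)) \<and> finite (mtrans (weak_det T)) \<and> is_multi_transducer (weak_det T)"
    if wt: "weak_twinning T"
  proof -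
    have fu: "finite (useful (weak_det_bar T))" using useful_finite[OF assms(1) wt i] .
    then show ?thesis using mtrans_finite[OF assms(1) fu] multi
      by (simp add: weak_det_def trim_part_def)
  qed
  show ?thesis using 1 2 by blast
qed

end
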